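(* Let $\mathcal T$ be a theory of $\mathsf{LGI}$, let $\alpha,\beta$ be basic expressions and $c,d\in[0,1]$, and assume every element of $\tau(\alpha,c)$ and of $\tau(\beta,d)$ is provable from $\mathcal T$ in $\mathsf{LGI}$. Then for $r\in[0,1]$: if $r<1-c+d$ then $\mathcal T\vdash_{\mathsf{LGI}}\alpha\Rightarrow_r\beta$, and if $r>1-c+d$ then $\mathcal T\vdash_{\mathsf{LGI}}\lnot(\alpha\Rightarrow_r\beta)$.
   Context: Fix a continuous t-norm $\odot$ on $[0,1]$ and let $c\oplus d = 1-((1-c)\odot(1-d))$. Write $c\odot_{\L} d=\max(c+d-1,0)$, $c\oplus_{\L} d=\min(c+d,1)$. Syntax of $\mathsf{LGI}$: countably many variables $\phi_0,\phi_1,\dots$ and constants $\bot,\top$. Basic expressions are built from variables and constants by binary $\land,\lor,\odot$ and unary $\sim$. A graded implication is written $\alpha\Rightarrow_c\beta$ with $\alpha,\beta$ basic expressions, $c\in[0,1]$. Formulas are built from graded implications by classical $\land,\lor,\lnot$; $\Phi\to\Psi$ abbreviates $\lnot\Phi\lor\Psi$. A theory is a set of formulas. For a basic expression $\alpha$ and $c\in[0,1]$, $\tau(\alpha,c)=\{\top\Rightarrow_t\alpha : t\in[0,1],\ t<c\}\cup\{\alpha\Rightarrow_{1-t}\bot : t\in[0,1],\ t>c\}$. Calculus $\mathsf{LGI}$: axioms are (i) all substitution instances (by graded implications) of classical propositional tautologies; (ii) for all basic expressions $\alpha,\beta,\gamma$ and $c,d\in[0,1]$: ($\land_1$) $(\alpha\Rightarrow_d\beta)\land(\alpha\Rightarrow_d\gamma)\to(\alpha\Rightarrow_d\beta\land\gamma)$;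 ($\land_2$) $\alpha\land\beta\Rightarrow_1\alpha$; ($\land_3$) $\alpha\land\beta\Rightarrow_1\beta$; ($\lor_1$) $(\alpha\Rightarrow_d\gamma)\land(\beta\Rightarrow_d\gamma)\to(\alpha\lor\beta\Rightarrow_d\gamma)$; ($\lor_2$) $\alpha\Rightarrow_1\alpha\lor\beta$; ($\lor_3$) $\beta\Rightarrow_1\alpha\lor\beta$; ($\odot_1$) $(\top\Rightarrow_c\alpha)\land(\top\Rightarrow_d\beta)\to(\top\Rightarrow_{c\odot d}\alpha\odot\beta)$; ($\odot_2$) $(\alpha\Rightarrow_c\bot)\land(\beta\Rightarrow_d\bot)\to(\alpha\odot\beta\Rightarrow_{c\oplus d}\bot)$; ($\odot_3$) $\top\Rightarrow_1\top\odot\top$; ($\sim_1$) $(\alpha\Rightarrow_d\beta)\to(\sim\beta\Rightarrow_d\sim\alpha)$; ($\sim_2$) $\sim\sim\alpha\Rightarrow_1\alpha$; ($\sim_3$) $\alpha\Rightarrow_1\sim\sim\alpha$; ($\top$) $\alpha\Rightarrow_1\top$; ($\bot$) $\bot\Rightarrow_1\alpha$; (0) $\alpha\Rightarrow_0\beta$; ($c$) $\alpha\Rightarrow_c\alpha$; (inkons) $\lnot(\top\Rightarrow_c\bot)$ for $c>0$; (trans$_1$) $(\alpha\Rightarrow_c\beta)\land(\beta\Rightarrow_d\gamma)\to(\alpha\Rightarrow_{c\odot_{\L}d}\gamma)$; (trans$_2$) $(\alpha\Rightarrow_c\bot)\land(\top\Rightarrow_d\beta)\to(\alpha\Rightarrow_{c\oplus_{\L}d}\beta)$;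 (lin$_1$) $(\alpha\Rightarrow_1\beta)\lor(\beta\Rightarrow_1\alpha)$; (lin$_2$) $(\top\Rightarrow_d\alpha)\lor(\alpha\Rightarrow_{1-d}\bot)$. The only rule is modus ponens. $\mathcal T\vdash_{\mathsf{LGI}}\Phi$ means $\Phi$ has a finite derivation from axioms and elements of $\mathcal T$ by modus ponens. *)

theory Defs
  imports "HOL-Analysis.Analysis"
begin

definition tnorm :: "(real \<Rightarrow> real \<Rightarrow> real) \<Rightarrow> bool" where
  "tnorm T \<longleftrightarrow>
     (\<forall>x\<in>{0..1}. \<forall>y\<in>{0..1}. T x y \<in> {0..1}) \<and>
     (\<forall>x\<in>{0..1}. \<forall>y\<in>{0..1}. T x y = T y x) \<and>
     (\<forall>x\<in>{0..1}. \<forall>y\<in>{0..1}. \<forall>z\<in>{0..1}. T (T x y) z = T x (T y z)) \<and>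
     (\<forall>x\<in>{0..1}. \<forall>y\<in>{0..1}. \<forall>z\<in>{0..1}. y \<le> z \<longrightarrow> T x y \<le> T x z) \<and>
     (\<forall>x\<in>{0..1}. T x 1 = x)"

definition continuous_tnorm :: "(real \<Rightarrow> real \<Rightarrow> real) \<Rightarrow> bool" where
  "continuous_tnorm T \<longleftrightarrow> tnorm T \<and>
     continuous_on ({0..1} \<times> {0..1}) (\<lambda>p. T (fst p) (snd p))"

definition tconorm :: "(real \<Rightarrow> real \<Rightarrow> real) \<Rightarrow> real \<Rightarrow> real \<Rightarrow> real" where
  "tconorm T c d = 1 - T (1 - c) (1 - d)"

definition luk_t :: "real \<Rightarrow> real \<Rightarrow> real" where
  "luk_t c d = max (c + d - 1) 0"

definition luk_s :: "real \<Rightarrow> real \<Rightarrow> real" where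
  "luk_s c d = min (c + d) 1"

datatype bexp = Var nat | Bot | Top | BAnd bexp bexp | BOr bexp bexp
  | BTimes bexp bexp | BNeg bexp

text \<open>Formulas: graded implications \<alpha> \<Rightarrow>_c \<beta> combined by classical connectives.
  The grade is a real; well-formedness (grades in [0,1]) is a separate predicate.\<close>
datatype fml = GImp bexp real bexp | FAnd fml fml | FOr fml fml | FNot fml

definition FImp :: "fml \<Rightarrow> fml \<Rightarrow> fml" where
  "FImp \<Phi> \<Psi> = FOr (FNot \<Phi>) \<Psi>"

fun wf_fml :: "fml \<Rightarrow> bool" where
  "wf_fml (GImp a c b) = (0 \<le> c \<and> c \<le> 1)"
| "wf_fml (FAnd p q) = (wf_fml p \<and> wf_fml q)"
| "wf_fml (FOr p q) = (wf_fml p \<and> wf_fml q)"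
| "wf_fml (FNot p) = wf_fml p"

fun feval :: "(bexp \<Rightarrow> real \<Rightarrow> bexp \<Rightarrow> bool) \<Rightarrow> fml \<Rightarrow> bool" where
  "feval v (GImp a c b) = v a c b"
| "feval v (FAnd p q) = (feval v p \<and> feval v q)"
| "feval v (FOr p q) = (feval v p \<or> feval v q)"
| "feval v (FNot p) = (\<not> feval v p)"

text \<open>Substitution instances of classical tautologies are exactly the formulas
  true under every assignment of truth values to the graded-implication atoms.\<close>
definition taut :: "fml \<Rightarrow> bool" where
  "taut \<Phi> \<longleftrightarrow> wf_fml \<Phi> \<and> (\<forall>v. feval v \<Phi>)"

definition unit_iv :: "real \<Rightarrow> bool" where
  "unit_iv c \<longleftrightarrow> 0 \<le> c \<and> c \<le> 1"

inductive lgi_axiom :: "(real \<Rightarrow> real \<Rightarrow> real) \<Rightarrow> fml \<Rightarrow> bool" for T where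
  ax_taut: "taut \<Phi> \<Longrightarrow> lgi_axiom T \<Phi>"
| ax_and1: "unit_iv d \<Longrightarrow> lgi_axiom T (FImp (FAnd (GImp a d b) (GImp a d g)) (GImp a d (BAnd b g)))"
| ax_and2: "lgi_axiom T (GImp (BAnd a b) 1 a)"
| ax_and3: "lgi_axiom T (GImp (BAnd a b) 1 b)"
| ax_or1: "unit_iv d \<Longrightarrow> lgi_axiom T (FImp (FAnd (GImp a d g) (GImp b d g)) (GImp (BOr a b) d g))"
| ax_or2: "lgi_axiom T (GImp a 1 (BOr a b))"
| ax_or3: "lgi_axiom T (GImp b 1 (BOr a b))"
| ax_odot1: "unit_iv c \<Longrightarrow> unit_iv d \<Longrightarrow>
    lgi_axiom T (FImp (FAnd (GImp Top c a) (GImp Top d b)) (GImp Top (T c d) (BTimes a b)))"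
| ax_odot2: "unit_iv c \<Longrightarrow> unit_iv d \<Longrightarrow>
    lgi_axiom T (FImp (FAnd (GImp a c Bot) (GImp b d Bot)) (GImp (BTimes a b) (tconorm T c d) Bot))"
| ax_odot3: "lgi_axiom T (GImp Top 1 (BTimes Top Top))"
| ax_neg1: "unit_iv d \<Longrightarrow> lgi_axiom T (FImp (GImp a d b) (GImp (BNeg b) d (BNeg a)))"
| ax_neg2: "lgi_axiom T (GImp (BNeg (BNeg a)) 1 a)"
| ax_neg3: "lgi_axiom T (GImp a 1 (BNeg (BNeg a)))"
| ax_top: "lgi_axiom T (GImp a 1 Top)"
| ax_bot: "lgi_axiom T (GImp Bot 1 a)"
| ax_zero: "lgi_axiom T (GImp a 0 b)"
| ax_refl: "unit_iv c \<Longrightarrow> lgi_axiom T (GImp a c a)"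
| ax_inkons: "unit_iv c \<Longrightarrow> c > 0 \<Longrightarrow> lgi_axiom T (FNot (GImp Top c Bot))"
| ax_trans1: "unit_iv c \<Longrightarrow> unit_iv d \<Longrightarrow>
    lgi_axiom T (FImp (FAnd (GImp a c b) (GImp b d g)) (GImp a (luk_t c d) g))"
| ax_trans2: "unit_iv c \<Longrightarrow> unit_iv d \<Longrightarrow>
    lgi_axiom T (FImp (FAnd (GImp a c Bot) (GImp Top d b)) (GImp a (luk_s c d) b))"
| ax_lin1: "lgi_axiom T (FOr (GImp a 1 b) (GImp b 1 a))"
| ax_lin2: "unit_iv d \<Longrightarrow> lgi_axiom T (FOr (GImp Top d a) (GImp a (1 - d) Bot))"

inductive lgi_derives :: "(real \<Rightarrow> real \<Rightarrow> real) \<Rightarrow> fml set \<Rightarrow> fml \<Rightarrow> bool" for T \<Gamma> where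
  der_ax: "lgi_axiom T \<Phi> \<Longrightarrow> lgi_derives T \<Gamma> \<Phi>"
| der_hyp: "\<Phi> \<in> \<Gamma> \<Longrightarrow> lgi_derives T \<Gamma> \<Phi>"
| der_mp: "lgi_derives T \<Gamma> (FImp \<Phi> \<Psi>) \<Longrightarrow> lgi_derives T \<Gamma> \<Phi> \<Longrightarrow> lgi_derives T \<Gamma> \<Psi>"

definition tau :: "bexp \<Rightarrow> real \<Rightarrow> fml set" where
  "tau a c = {GImp Top t a | t. 0 \<le> t \<and> t \<le> 1 \<and> t < c}
           \<union> {GImp a (1 - t) Bot | t. 0 \<le> t \<and> t \<le> 1 \<and> t > c}"

end

theory Submission
  imports Defs
begin

lemma der_taut:
  assumes "taut \<Phi>" shows "lgi_derives T \<Gamma> \<Phi>"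
  using assms by (intro der_ax ax_taut)

lemma der_tr1:
  assumes "lgi_derives T \<Gamma> (GImp x p y)" "lgi_derives T \<Gamma> (GImp y q z)"
    "0 \<le> p" "p \<le> 1" "0 \<le> q" "q \<le> 1"
  shows "lgi_derives T \<Gamma> (GImp x (luk_t p q) z)"
proof -
  have ax: "lgi_derives T \<Gamma> (FImp (FAnd (GImp x p y) (GImp y q z)) (GImp x (luk_t p q) z))"
    using assms by (intro der_ax ax_trans1) (auto simp: unit_iv_def)
  have t: "lgi_derives T \<Gamma> (FImp (GImp x p y) (FImp (GImp y q z) (FAnd (GImp x p y) (GImp y q z))))"
    using assms by (intro der_taut) (auto simp: taut_def FImp_def)
  have "lgi_derives T \<Gamma> (FAnd (GImp x p y) (GImp y q z))"
    using der_mp[OF der_mp[OF t assms(1)] assms(2)] .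
  then show ?thesis using der_mp[OF ax] by blast
qed

lemma der_tr2:
  assumes "lgi_derives T \<Gamma> (GImp x p Bot)" "lgi_derives T \<Gamma> (GImp Top q z)"
    "0 \<le> p" "p \<le> 1" "0 \<le> q" "q \<le> 1"
  shows "lgi_derives T \<Gamma> (GImp x (luk_s p q) z)"
proof -
  have ax: "lgi_derives T \<Gamma> (FImp (FAnd (GImp x p Bot) (GImp Top q z)) (GImp x (luk_s p q) z))"
    using assms by (intro der_ax ax_trans2) (auto simp: unit_iv_def)
  have t: "lgi_derives T \<Gamma> (FImp (GImp x p Bot) (FImp (GImp Top q z) (FAnd (GImp x p Bot) (GImp Top q z))))"
    using assms by (intro der_taut) (auto simp: taut_def FImp_def)
  have "lgi_derives T \<Gamma> (FAnd (GImp x p Bot) (GImp Top q z))"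
    using der_mp[OF der_mp[OF t assms(1)] assms(2)] .
  then show ?thesis using der_mp[OF ax] by blast
qed

theorem mainTheorem4:
  fixes T :: "real \<Rightarrow> real \<Rightarrow> real" and \<Gamma> :: "fml set"
    and a b :: bexp and c d r :: real
  assumes "continuous_tnorm T"
    and "\<forall>\<Phi>\<in>\<Gamma>. wf_fml \<Phi>"
    and "0 \<le> c" "c \<le> 1" "0 \<le> d" "d \<le> 1"
    and H: "\<forall>\<Phi>\<in>tau a c \<union> tau b d. lgi_derives T \<Gamma> \<Phi>"
    and "0 \<le> r" "r \<le> 1"
  shows "(r < 1 - c + d \<longrightarrow> lgi_derives T \<Gamma> (GImp a r b))
       \<and> (r > 1 - c + d \<longrightarrow> lgi_derives T \<Gamma> (FNot (GImp a r b)))"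
proof (intro conjI impI)
  have topA: "lgi_derives T \<Gamma> (GImp Top t a)" if "0 \<le> t" "t < c" for t
    using H that assms by (auto simp: tau_def)
  have botA: "lgi_derives T \<Gamma> (GImp a (1 - t) Bot)" if "t \<le> 1" "c < t" for t
    using H that assms by (auto simp: tau_def)
  have topB: "lgi_derives T \<Gamma> (GImp Top t b)" if "0 \<le> t" "t < d" for t
    using H that assms by (auto simp: tau_def)
  have botB: "lgi_derives T \<Gamma> (GImp b (1 - t) Bot)" if "t \<le> 1" "d < t" for t
    using H that assms by (auto simp: tau_def)
  {
    assume lt: "r < 1 - c + d"
    show "lgi_derives T \<Gamma> (GImp a r b)"
    proof (cases "r < d")
      case True
      have "lgi_derives T \<Gamma> (GImp a (luk_t 1 r) b)"
        by (rule der_tr1[OF der_ax[OF ax_top] topB]) (use True assms in auto)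
      then show ?thesis using assms by (simp add: luk_t_def)
    next
      case nd: False
      show ?thesis
      proof (cases "r < 1 - c")
        case True
        have "lgi_derives T \<Gamma> (GImp a (luk_t (1 - (1 - r)) 1) b)"
          by (rule der_tr1[OF botA der_ax[OF ax_bot]]) (use True assms in auto)
        then show ?thesis using assms by (simp add: luk_t_def)
      next
        case False
        define e where "e = 1 - c + d - r"
        have "lgi_derives T \<Gamma> (GImp a (luk_s (1 - (c + e/2)) (d - e/2)) b)"
          by (rule der_tr2[OF botA topB]) (use False nd lt assms(3-6) assms(8-9) in \<open>auto simp: e_def field_simps\<close>)
        moreover have "luk_s (1 - (c + e/2)) (d - e/2) = r"
          using assms by (simp add: luk_s_def e_def)
        ultimately show ?thesis by simp
      qed
    qed
  }
  {
    assume gt: "r > 1 - c + d"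
    define e where "e = r - 1 + c - d"
    define t where "t = c - e/3"
    define s where "s = d + e/3"
    define u where "u = d + 2*e/3"
    have e: "0 < e" "e \<le> c - d" using gt assms by (auto simp: e_def)
    have A: "lgi_derives T \<Gamma> (GImp Top t a)" using e assms by (intro topA) (auto simp: t_def)
    have B: "lgi_derives T \<Gamma> (GImp b (1 - s) Bot)" using e assms by (intro botB) (auto simp: s_def)
    have N: "lgi_derives T \<Gamma> (FNot (GImp Top (e/3) Bot))"
      using e assms by (intro der_ax ax_inkons) (auto simp: unit_iv_def)
    have ut: "luk_t t r = u" using e assms unfolding luk_t_def t_def u_def e_def by (simp add: max_def field_simps)
    have ut2: "luk_t u (1 - s) = e/3" using e assms by (simp add: luk_t_def s_def u_def)
    have X1: "lgi_derives T \<Gamma> (FImp (FAnd (GImp Top t a) (GImp a r b)) (GImp Top u b))"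
    proof -
      have "lgi_axiom T (FImp (FAnd (GImp Top t a) (GImp a r b)) (GImp Top (luk_t t r) b))"
        using e assms by (intro ax_trans1) (auto simp: unit_iv_def t_def)
      then show ?thesis unfolding ut by (rule der_ax)
    qed
    have X2: "lgi_derives T \<Gamma> (FImp (FAnd (GImp Top u b) (GImp b (1 - s) Bot)) (GImp Top (e/3) Bot))"
    proof -
      have "lgi_axiom T (FImp (FAnd (GImp Top u b) (GImp b (1 - s) Bot)) (GImp Top (luk_t u (1 - s)) Bot))"
        using e assms by (intro ax_trans1) (auto simp: unit_iv_def u_def s_def)
      then show ?thesis unfolding ut2 by (rule der_ax)
    qed
    have TT: "lgi_derives T \<Gamma> (FImp (GImp Top t a) (FImp (GImp b (1 - s) Bot) (FImp (FNot (GImp Top (e/3) Bot))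
       (FImp (FImp (FAnd (GImp Top t a) (GImp a r b)) (GImp Top u b))
        (FImp (FImp (FAnd (GImp Top u b) (GImp b (1 - s) Bot)) (GImp Top (e/3) Bot)) (FNot (GImp a r b)))))))"
      using e assms by (intro der_taut) (auto simp: taut_def FImp_def t_def s_def u_def)
    show "lgi_derives T \<Gamma> (FNot (GImp a r b))"
      using der_mp[OF der_mp[OF der_mp[OF der_mp[OF der_mp[OF TT A] B] N] X1] X2] .
  }
qed

end
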